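(* For every $n\in\{0,1,2,\dots\}$, \[ {}_2F_1\Big(n+\tfrac12,n+1;n+\tfrac32;-1\Big)=\frac{(2n+1)!!}{(2n)!!}\,\frac{\pi}{4}+\frac{2n+1}{2^{2n}}\sum_{k=1}^{n}(-1)^k\binom{2n-k}{n}\frac{2^{k/2}}{k}\sin\frac{3k\pi}{4}. \]
   Context: ${}_2F_1(\alpha,\beta;\gamma;z)=\sum_{n\ge0}\frac{(\alpha)_n(\beta)_n}{(\gamma)_n}\frac{z^n}{n!}$ is Gauss' hypergeometric function, with $(a)_n=a(a+1)\cdots(a+n-1)$. Its value at $-1$ is that of its analytic continuation to $\mathbb{C}\setminus(1,\infty)$. $(2n)!!=2^nn!$ with $0!!=1$, and $(2n+1)!!=1\cdot3\cdots(2n+1)$. An empty sum is $0$. *)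

theory Defs
  imports "HOL-Complex_Analysis.Complex_Analysis"
begin

text \<open>Gauss' hypergeometric series (as a power series; meaningful for norm z < 1).\<close>
definition hyp2F1_series :: "complex \<Rightarrow> complex \<Rightarrow> complex \<Rightarrow> complex \<Rightarrow> complex" where
  "hyp2F1_series a b c z =
     (\<Sum>n. pochhammer a n * pochhammer b n / pochhammer c n * z ^ n / fact n)"

definition cut_plane :: "complex set" where
  "cut_plane = - {complex_of_real x | x. x \<ge> 1}"

text \<open>Value of the analytic continuation of 2F1 to the cut plane: the value at z of the
  (unique, by the identity theorem) holomorphic function on the cut plane that agrees
  with the hypergeometric series on the open unit disc.\<close>
definition hyp2F1 :: "complex \<Rightarrow> complex \<Rightarrow> complex \<Rightarrow> complex \<Rightarrow> complex" where
  "hyp2F1 a b c z =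
     (THE v. \<exists>f. f holomorphic_on cut_plane \<and>
                 (\<forall>w\<in>ball 0 1. f w = hyp2F1_series a b c w) \<and> f z = v)"

fun dfact :: "nat \<Rightarrow> nat" where
  "dfact 0 = 1"
| "dfact (Suc 0) = 1"
| "dfact (Suc (Suc m)) = Suc (Suc m) * dfact m"

end

theory Submission
  imports Defs
begin

lemma P_split:
  fixes m :: nat
  defines "P \<equiv> (\<Sum>k\<le>m. of_nat ((2*m+1) choose k) * \<i>^k :: complex)"
  defines "P' \<equiv> (\<Sum>k\<le>m. of_nat ((2*m+1) choose k) * (-\<i>)^k :: complex)"
  shows "P + \<i>^(2*m+1) * P' = (1+\<i>)^(2*m+1)"
proof -
  have "(1+\<i>)^(2*m+1) = (\<Sum>k\<le>2*m+1. of_nat ((2*m+1) choose k) * \<i>^k)"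
    using binomial_ring[of "\<i>" "1::complex" "2*m+1"] by (simp add: add.commute)
  also have "\<dots> = (\<Sum>k\<in>{..m} \<union> {m<..2*m+1}. of_nat ((2*m+1) choose k) * \<i>^k)"
    by (rule sum.cong) auto
  also have "\<dots> = P + (\<Sum>k\<in>{m<..2*m+1}. of_nat ((2*m+1) choose k) * \<i>^k)"
    unfolding P_def by (subst sum.union_disjoint) auto
  also have "(\<Sum>k\<in>{m<..2*m+1}. of_nat ((2*m+1) choose k) * \<i>^k)
      = (\<Sum>j\<le>m. of_nat ((2*m+1) choose (2*m+1-j)) * \<i>^(2*m+1-j))"
    by (rule sum.reindex_bij_witness[of _ "\<lambda>j. 2*m+1-j" "\<lambda>k. 2*m+1-k"]) auto
  also have "\<dots> = \<i>^(2*m+1) * P'"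
    unfolding P'_def sum_distrib_left
  proof (rule sum.cong)
    fix j assume j: "j \<in> {..m}"
    have "\<i>^(2*m+1-j) = \<i>^(2*m+1) * (-\<i>)^j"
    proof -
      have "\<i>^(2*m+1-j) * (\<i>^j * (-\<i>)^j) = \<i>^(2*m+1) * (-\<i>)^j"
        using j by (simp add: mult.assoc[symmetric] power_add[symmetric])
      moreover have "\<i>^j * (-\<i>)^j = (1::complex)"
        by (simp add: power_mult_distrib[symmetric])
      ultimately show ?thesis by simp
    qed
    moreover have "(2*m+1) choose (2*m+1-j) = (2*m+1) choose j"
      using j by (intro binomial_symmetric[symmetric]) auto
    ultimately show "of_nat ((2*m+1) choose (2*m+1-j)) * \<i>^(2*m+1-j)
        = \<i>^(2*m+1) * (of_nat ((2*m+1) choose j) * (-\<i>)^j)" by simp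
  qed simp
  finally show ?thesis by simp
qed

lemma i_pow_odd: "\<i>^(2*m+1) = \<i> * (-1)^m"
proof -
  have "\<i>^(2*m+1) = (\<i>^2)^m * \<i>" by (simp only: power_add power_mult power_one_right)
  thus ?thesis by simp
qed

lemma minus_i_pow: "(-\<i>)^m = (-1)^m * \<i>^m"
  by (rule power_minus)

lemma aux_alg: "(x1::complex) = -x2*x3*(x4 - x5) \<Longrightarrow> x6 = x2*x4 \<Longrightarrow> x1 = x2*x3*x5 - x6*x3"
  by (simp add: algebra_simps)

lemma Q_im:
  fixes m :: nat
  shows "Im ((1+\<i>) * (-\<i>)^m * (\<Sum>k\<le>m. of_nat ((2*m+1) choose k) * \<i>^k)) = 2^m"
proof -
  define P where "P = (\<Sum>k\<le>m. of_nat ((2*m+1) choose k) * \<i>^k :: complex)"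
  define P' where "P' = (\<Sum>k\<le>m. of_nat ((2*m+1) choose k) * (-\<i>)^k :: complex)"
  define Q where "Q = (1+\<i>) * (-\<i>)^m * P"
  have sp: "P + \<i>^(2*m+1) * P' = (1+\<i>)^(2*m+1)"
    unfolding P_def P'_def by (rule P_split)
  have cP: "cnj P = P'" unfolding P_def P'_def by (simp add: cnj_sum)
  have cQ: "cnj Q = (1-\<i>) * \<i>^m * P'"
    unfolding Q_def using cP by simp
  have key: "(1-\<i>) * \<i>^m = -(1+\<i>) * (-\<i>)^m * \<i>^(2*m+1)"
  proof -
    have "-(1+\<i>) * (-\<i>)^m * \<i>^(2*m+1) = -(1+\<i>) * \<i> * \<i>^m * ((-1)^m * (-1)^m)"
      unfolding i_pow_odd minus_i_pow by (simp only: mult_ac)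
    also have "(-1::complex)^m * (-1)^m = 1" by (simp add: power_mult_distrib[symmetric])
    finally show ?thesis by (simp add: algebra_simps)
  qed
  have "cnj Q = -(1+\<i>) * (-\<i>)^m * (\<i>^(2*m+1) * P')"
    using cQ key by (simp add: mult.assoc)
  also have "\<i>^(2*m+1) * P' = (1+\<i>)^(2*m+1) - P" using sp by (simp add: algebra_simps)
  finally have c1: "cnj Q = -(1+\<i>) * (-\<i>)^m * ((1+\<i>)^(2*m+1) - P)" .
  have c2: "(1+\<i>)^(2*m+2) = (1+\<i>) * (1+\<i>)^(2*m+1)" by simp
  have "cnj Q = (1+\<i>) * (-\<i>)^m * P - (1+\<i>)^(2*m+2) * (-\<i>)^m"
    by (rule aux_alg[OF c1 c2])
  hence "cnj Q = Q - (1+\<i>)^(2*m+2) * (-\<i>)^m" by (simp only: Q_def[symmetric])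
  also have "(1+\<i>)^(2*m+2) * (-\<i>)^m = (2*\<i>)^(m+1) * (-\<i>)^m"
  proof -
    have e: "2*m+2 = 2*(m+1)" by simp
    have "(1+\<i>)^(2*m+2) = ((1+\<i>)^2)^(m+1)" unfolding e by (rule power_mult)
    also have "(1+\<i>)^2 = 2*\<i>" by (simp add: power2_eq_square algebra_simps)
    finally show ?thesis by simp
  qed
  also have "\<dots> = 2 * \<i> * 2^m"
  proof -
    have "(2*\<i>)^(m+1) * (-\<i>)^m = 2*\<i> * 2^m * (\<i> * (-\<i>))^m"
      unfolding power_mult_distrib by simp
    also have "\<i> * (-\<i>) = 1" by simp
    finally show ?thesis by (simp only: power_one mult_1_right)
  qed
  finally have "Q - cnj Q = 2 * \<i> * 2^m" by simp
  hence "Im (Q - cnj Q) = 2 * 2^m" by simp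
  hence "Im Q = 2^m" by simp
  thus ?thesis unfolding Q_def P_def .
qed


lemma B_reindex:
  fixes x :: complex
  shows "(\<Sum>k\<le>m. of_nat ((2*m - k) choose m) * x^k) = (\<Sum>j\<le>m. of_nat ((m+j) choose j) * x^(m-j))"
proof (rule sum.reindex_bij_witness[of _ "\<lambda>k. m - k" "\<lambda>j. m - j"])
  fix k assume k: "k \<in> {..m}"
  have "m + (m - k) = 2*m - k" using k by auto
  moreover have "(2*m-k) choose (m-k) = (2*m-k) choose m"
    using binomial_symmetric[of "m-k" "2*m-k"] k by auto
  moreover have "m - (m-k) = k" using k by auto
  ultimately show "of_nat ((m + (m-k)) choose (m-k)) * x^(m-(m-k)) = of_nat ((2*m - k) choose m) * x^k"
    by simp
qed auto

lemma B_poly: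
  "(\<Sum>j\<le>m. of_nat ((m+j) choose j) * (1-\<i>)^(m-j)) = (\<Sum>k\<le>m. of_nat ((2*m+1) choose k) * (-\<i>)^(m-k))"
proof -
  have "(\<Sum>k\<le>m. (of_nat m + (of_nat m + 1) gchoose k) * 1^k * (-\<i>)^(m-k)) =
     (\<Sum>k\<le>m. (of_nat k + (of_nat m + 1) - 1 gchoose k) * 1^k * (1 + -\<i>)^(m-k))"
    by (rule gbinomial_partial_sum_poly_xpos)
  moreover have "\<And>k. (of_nat m + (of_nat m + 1) gchoose k) = (of_nat ((2*m+1) choose k) :: complex)"
  proof -
    have "(of_nat m + (of_nat m + 1) :: complex) = of_nat (2*m+1)" by simp
    thus "\<And>k. (of_nat m + (of_nat m + 1) gchoose k) = (of_nat ((2*m+1) choose k) :: complex)"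
      by (simp only: binomial_gbinomial)
  qed
  moreover have "\<And>k. (of_nat k + (of_nat m + 1) - 1 gchoose k) = (of_nat ((m+k) choose k) :: complex)"
  proof -
    fix k
    have "(of_nat k + (of_nat m + 1) - 1 :: complex) = of_nat (m+k)" by simp
    thus "(of_nat k + (of_nat m + 1) - 1 gchoose k) = (of_nat ((m+k) choose k) :: complex)"
      by (simp only: binomial_gbinomial)
  qed
  ultimately show ?thesis by simp
qed

lemma B_im:
  "Im ((1+\<i>) * (\<Sum>k\<le>m. of_nat ((2*m - k) choose m) * (1-\<i>)^k)) = 2^m"
proof -
  have "(\<Sum>k\<le>m. of_nat ((2*m+1) choose k) * (-\<i>)^(m-k)) =
        (-\<i>)^m * (\<Sum>k\<le>m. of_nat ((2*m+1) choose k) * \<i>^k)"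
    unfolding sum_distrib_left
  proof (rule sum.cong)
    fix k assume k: "k \<in> {..m}"
    have "(-\<i>)^m = (-\<i>)^(m-k) * (-\<i>)^k" using k by (simp add: power_add[symmetric])
    hence "(-\<i>)^m * \<i>^k = (-\<i>)^(m-k) * ((-\<i>)^k * \<i>^k)" by (simp add: mult.assoc)
    also have "(-\<i>)^k * \<i>^k = (1::complex)" by (simp add: power_mult_distrib[symmetric])
    finally show "of_nat ((2*m+1) choose k) * (-\<i>)^(m-k) = (-\<i>)^m * (of_nat ((2*m+1) choose k) * \<i>^k)"
      by simp
  qed simp
  thus ?thesis using Q_im[of m] B_reindex[of m "1-\<i>"] B_poly[of m] by (simp only: mult.assoc)
qed


lemma binom_aux1: "(q+1) * (p choose (q+1)) = (p - q) * (p choose q)" if "q \<le> p" for p q :: nat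
proof -
  have "Suc q * (Suc p choose Suc q) = Suc p * (p choose q)" by (rule Suc_times_binomial)
  moreover have "Suc p choose Suc q = (p choose q) + (p choose Suc q)" by simp
  ultimately have "Suc q * (p choose q) + Suc q * (p choose Suc q) = Suc p * (p choose q)"
    by (simp add: algebra_simps)
  hence "Suc q * (p choose Suc q) = (Suc p - Suc q) * (p choose q)"
    by (simp add: diff_mult_distrib)
  thus ?thesis using that by simp
qed

lemma binom_aux2: "(q+2) * (q+1) * ((p+2) choose (q+2)) = (p+2) * (p+1) * (p choose q)" for p q :: nat
proof -
  have a: "Suc (Suc q) * (Suc (Suc p) choose Suc (Suc q)) = Suc (Suc p) * (Suc p choose Suc q)"
    by (rule Suc_times_binomial)
  have b: "Suc q * (Suc p choose Suc q) = Suc p * (p choose q)" by (rule Suc_times_binomial)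
  have "(q+2) * (q+1) * ((p+2) choose (q+2)) = (q+1) * (Suc (Suc q) * (Suc (Suc p) choose Suc (Suc q)))"
    by (simp add: algebra_simps)
  also have "\<dots> = (p+2) * (Suc q * (Suc p choose Suc q))" unfolding a by (simp add: algebra_simps)
  also have "\<dots> = (p+2) * (p+1) * (p choose q)" unfolding b by (simp add: algebra_simps)
  finally show ?thesis .
qed

lemma term_id_pq:
  fixes p q :: nat
  assumes "q \<le> p"
  shows "real (2*q+4) * real ((p+2) choose (q+2)) - real (4*(2*q+3)) * real (p choose (q+1))
       = 2 * (real (2*q+2) - real p) * (real (p choose q) - real (p choose (q+1)))"
proof -
  define c where "c = real (p choose q)"
  define X where "X = real ((p+2) choose (q+2))"
  define Y where "Y = real (p choose (q+1))"
  have hX: "(real q+2)*(real q+1)*X = (real p+2)*(real p+1)*c"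
  proof -
    have "real ((q+2) * (q+1) * ((p+2) choose (q+2))) = real ((p+2) * (p+1) * (p choose q))"
      using binom_aux2 by metis
    thus ?thesis
      unfolding c_def X_def by (simp only: of_nat_mult of_nat_add of_nat_numeral of_nat_1)
  qed
  have hY: "(real q+1) * Y = (real p - real q) * c"
  proof -
    have "real ((q+1) * (p choose (q+1))) = real ((p - q) * (p choose q))"
      using binom_aux1[OF assms] by metis
    thus ?thesis
      unfolding c_def Y_def using assms by (simp only: of_nat_mult of_nat_add of_nat_1 of_nat_diff)
  qed
  have nz1: "(real q+2)*(real q+1) \<noteq> 0" by (simp add: add_pos_pos)
  have nz2: "real q+1 \<noteq> 0" by simp
  have XA: "X = (real p+2)*(real p+1)*c / ((real q+2)*(real q+1))"
    by (metis nz1 hX nonzero_mult_div_cancel_left)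
  have YB: "Y = (real p - real q) * c / (real q + 1)"
    by (metis nz2 hY nonzero_mult_div_cancel_left)
  have "(real q + 1) * ((2*real q+4) * X - (8*real q+12) * Y - 2 * ((2*real q+2) - real p) * (c - Y)) = 0"
    using hX hY by algebra
  hence "(2*real q+4) * X - (8*real q+12) * Y = 2 * ((2*real q+2) - real p) * (c - Y)"
    using nz2 by simp
  hence "real (2*q+4) * X - real (4*(2*q+3)) * Y = 2 * (real (2*q+2) - real p) * (c - Y)"
    by simp
  thus ?thesis unfolding X_def Y_def c_def .
qed

lemma term_id:
  fixes m j :: nat
  assumes "1 \<le> m" "j \<le> m"
  shows "real (2*m+2) * real ((2*m+1-j) choose (m+1)) - real (4*(2*m+1)) * real ((2*m-1-j) choose m)
       = 2 * real (j+1) * (real ((2*m-1-j) choose (m-1)) - real ((2*m-1-j) choose m))"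
proof -
  obtain q where q: "m = q+1" using assms by (metis add.commute le_Suc_ex)
  define p where "p = 2*m-1-j"
  have pq: "q \<le> p" using assms q p_def by simp
  have e1: "2*m+1-j = p+2" using assms q p_def by simp
  have e2: "real (2*q+2) - real p = real (j+1)" using assms q p_def by (simp add: of_nat_diff)
  have "real (2*m+2) * real ((2*m+1-j) choose (m+1)) - real (4*(2*m+1)) * real ((2*m-1-j) choose m)
      = real (2*q+4) * real ((p+2) choose (q+2)) - real (4*(2*q+3)) * real (p choose (q+1))"
    unfolding e1 unfolding p_def[symmetric] unfolding q by (simp add: algebra_simps del: binomial_Suc_Suc)
  also have "\<dots> = 2 * (real (2*q+2) - real p) * (real (p choose q) - real (p choose (q+1)))"
    by (rule term_id_pq[OF pq])
  finally show ?thesis unfolding e2 p_def[symmetric] using q by simp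
qed

lemma aux_cancel: "(a::complex) \<noteq> 0 \<Longrightarrow> 2 * a * d * y / a = 2 * (d * y)"
  by simp

definition Wc :: "nat \<Rightarrow> complex" where
  "Wc n = (\<Sum>k=1..n. of_nat ((2*n-k) choose n) * (1-\<i>)^k / of_nat k)"

lemma Wc_shift: "Wc n = (\<Sum>j<n. of_nat ((2*n-(j+1)) choose n) * (1-\<i>)^(j+1) / of_nat (j+1))"
  unfolding Wc_def using sum_bounds_lt_plus1[of "\<lambda>k. of_nat ((2*n-k) choose n) * (1-\<i>)^k / of_nat k" n]
  by simp

lemma Wc_rec:
  assumes m: "1 \<le> m"
  shows "of_nat (2*m+2) * Wc (m+1) - of_nat (4*(2*m+1)) * Wc m =
    2 * (\<Sum>j\<le>m. (of_nat ((2*m-1-j) choose (m-1)) - of_nat ((2*m-1-j) choose m)) * (1-\<i>)^(j+1))"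
proof -
  define x :: complex where "x = 1 - \<i>"
  have W1: "Wc (m+1) = (\<Sum>j\<le>m. of_nat ((2*m+1-j) choose (m+1)) * x^(j+1) / of_nat (j+1))"
    unfolding Wc_shift x_def lessThan_Suc_atMost[symmetric] by (intro sum.cong) auto
  have W0: "Wc m = (\<Sum>j\<le>m. of_nat ((2*m-1-j) choose m) * x^(j+1) / of_nat (j+1))"
  proof -
    have "Wc m = (\<Sum>j<m. of_nat ((2*m-1-j) choose m) * x^(j+1) / of_nat (j+1))"
      unfolding Wc_shift x_def by (intro sum.cong) auto
    also have "\<dots> = (\<Sum>j\<le>m. of_nat ((2*m-1-j) choose m) * x^(j+1) / of_nat (j+1))"
    proof -
      have "(2*m-1-m) choose m = 0" using m by simp
      thus ?thesis unfolding lessThan_Suc_atMost[symmetric] by simp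
    qed
    finally show ?thesis .
  qed
  have T: "of_nat (2*m+2) * (of_nat ((2*m+1-j) choose (m+1)) * x^(j+1) / of_nat (j+1))
       - of_nat (4*(2*m+1)) * (of_nat ((2*m-1-j) choose m) * x^(j+1) / of_nat (j+1))
     = 2 * ((of_nat ((2*m-1-j) choose (m-1)) - of_nat ((2*m-1-j) choose m)) * x^(j+1))"
    if j: "j \<le> m" for j
  proof -
    have r: "real (2*m+2) * real ((2*m+1-j) choose (m+1)) - real (4*(2*m+1)) * real ((2*m-1-j) choose m)
       = 2 * real (j+1) * (real ((2*m-1-j) choose (m-1)) - real ((2*m-1-j) choose m))"
      by (rule term_id[OF m j])
    have c: "(of_nat (2*m+2) * of_nat ((2*m+1-j) choose (m+1)) - of_nat (4*(2*m+1)) * of_nat ((2*m-1-j) choose m) :: complex)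
       = 2 * of_nat (j+1) * (of_nat ((2*m-1-j) choose (m-1)) - of_nat ((2*m-1-j) choose m))"
    proof -
      have "complex_of_real (real (2*m+2) * real ((2*m+1-j) choose (m+1)) - real (4*(2*m+1)) * real ((2*m-1-j) choose m))
         = complex_of_real (2 * real (j+1) * (real ((2*m-1-j) choose (m-1)) - real ((2*m-1-j) choose m)))"
        using r by simp
      thus ?thesis by (simp only: of_real_diff of_real_mult of_real_of_nat_eq of_real_numeral)
    qed
    have nz: "(of_nat (j+1) :: complex) \<noteq> 0" "(1 + of_nat j :: complex) \<noteq> 0"
      by (metis of_nat_eq_0_iff add_is_0 one_neq_zero) (metis of_nat_Suc of_nat_eq_0_iff Zero_not_Suc)
    have "of_nat (2*m+2) * (of_nat ((2*m+1-j) choose (m+1)) * x^(j+1) / of_nat (j+1))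
       - of_nat (4*(2*m+1)) * (of_nat ((2*m-1-j) choose m) * x^(j+1) / of_nat (j+1))
       = (of_nat (2*m+2) * of_nat ((2*m+1-j) choose (m+1)) - of_nat (4*(2*m+1)) * of_nat ((2*m-1-j) choose m)) * x^(j+1) / of_nat (j+1)"
      by (simp add: algebra_simps diff_divide_distrib del: binomial_Suc_Suc of_nat_add of_nat_mult)
    also have "\<dots> = 2 * ((of_nat ((2*m-1-j) choose (m-1)) - of_nat ((2*m-1-j) choose m)) * x^(j+1))"
      unfolding c by (rule aux_cancel[OF nz(1)])
    finally show ?thesis .
  qed
  show ?thesis
    unfolding W1 W0 sum_distrib_left sum_subtractf[symmetric] x_def[symmetric]
    by (intro sum.cong refl T) simp
qed

lemma aux_sum: "2 * (c + (\<Sum>j\<in>A. b j * y j)) - (\<Sum>j\<in>A. (a j + b j) * y j) =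
   2 * (c::complex) - (\<Sum>j\<in>A. (a j - b j) * y j)"
proof -
  have "(\<Sum>j\<in>A. (a j + b j) * y j) = (\<Sum>j\<in>A. a j * y j) + (\<Sum>j\<in>A. b j * y j)"
    by (simp add: sum.distrib distrib_right)
  moreover have "(\<Sum>j\<in>A. (a j - b j) * y j) = (\<Sum>j\<in>A. a j * y j) - (\<Sum>j\<in>A. b j * y j)"
    by (simp add: sum_subtractf left_diff_distrib)
  ultimately show ?thesis by (simp add: algebra_simps)
qed

lemma B_poly_id:
  assumes m: "1 \<le> m"
  shows "(2 - x) * (\<Sum>k\<le>m. of_nat ((2*m - k) choose m) * x^k) =
    2 * of_nat ((2*m) choose m) - (\<Sum>j\<le>m. (of_nat ((2*m-1-j) choose (m-1)) - of_nat ((2*m-1-j) choose m)) * (x::complex)^(j+1))"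
proof -
  define B where "B = (\<Sum>k\<le>m. of_nat ((2*m - k) choose m) * x^k)"
  have B1: "B = of_nat ((2*m) choose m) + (\<Sum>j\<le>m. of_nat ((2*m-1-j) choose m) * x^(j+1))"
  proof -
    have "B = (\<Sum>k\<le>Suc m. of_nat ((2*m - k) choose m) * x^k)"
    proof -
      have "(2*m - Suc m) choose m = 0" using m by simp
      thus ?thesis unfolding B_def by simp
    qed
    also have "\<dots> = of_nat ((2*m) choose m) + (\<Sum>j\<le>m. of_nat ((2*m - Suc j) choose m) * x^(Suc j))"
      by (subst sum.atMost_Suc_shift) simp
    also have "(\<Sum>j\<le>m. of_nat ((2*m - Suc j) choose m) * x^(Suc j)) = (\<Sum>j\<le>m. of_nat ((2*m-1-j) choose m) * x^(j+1))"
      by (intro sum.cong) auto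
    finally show ?thesis .
  qed
  have B2: "x * B = (\<Sum>j\<le>m. (of_nat ((2*m-1-j) choose (m-1)) + of_nat ((2*m-1-j) choose m)) * x^(j+1))"
    unfolding B_def sum_distrib_left
  proof (intro sum.cong refl)
    fix j assume j: "j \<in> {..m}"
    have e1: "2*m - j = Suc (2*m-1-j)" using j m by auto
    have e2: "m = Suc (m-1)" using m by auto
    have "(2*m - j) choose m = ((2*m-1-j) choose (m-1)) + ((2*m-1-j) choose m)"
      using binomial_Suc_Suc[of "2*m-1-j" "m-1"] e1 e2 by metis
    thus "x * (of_nat ((2*m - j) choose m) * x^j) =
        (of_nat ((2*m-1-j) choose (m-1)) + of_nat ((2*m-1-j) choose m)) * x^(j+1)"
      by (simp del: binomial_Suc_Suc)
  qed
  have "(2 - x) * B = 2 * B - x * B" by (simp add: algebra_simps)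
  also have "\<dots> = 2 * of_nat ((2*m) choose m) - (\<Sum>j\<le>m. (of_nat ((2*m-1-j) choose (m-1)) - of_nat ((2*m-1-j) choose m)) * x^(j+1))"
    unfolding B2 unfolding B1 by (rule aux_sum)
  finally show ?thesis unfolding B_def .
qed

lemma Wc_im_rec: "Im (of_nat (2*m+2) * Wc (m+1) - of_nat (4*(2*m+1)) * Wc m) = - (2^(m+1))"
proof (cases "m = 0")
  case True
  thus ?thesis by (simp add: Wc_def)
next
  case False
  hence m: "1 \<le> m" by simp
  have "Im (of_nat (2*m+2) * Wc (m+1) - of_nat (4*(2*m+1)) * Wc m) =
     Im (2 * (2 * of_nat ((2*m) choose m) - (2 - (1-\<i>)) * (\<Sum>k\<le>m. of_nat ((2*m - k) choose m) * (1-\<i>)^k)))"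
    unfolding Wc_rec[OF m] B_poly_id[OF m] by (simp del: binomial_Suc_Suc)
  also have "\<dots> = - 2 * Im ((1+\<i>) * (\<Sum>k\<le>m. of_nat ((2*m - k) choose m) * (1-\<i>)^k))"
    by (simp del: binomial_Suc_Suc Im_sum)
  also have "\<dots> = - (2^(m+1))" unfolding B_im by simp
  finally show ?thesis .
qed


definition gI :: "nat \<Rightarrow> real \<Rightarrow> real" where
  "gI n t = t^(2*n) / (1+t^2)^(n+1)"

lemma onept: "1 + t^2 \<noteq> (0::real)"
proof -
  have "0 \<le> t^2" by simp
  thus ?thesis by linarith
qed

lemma gI_cont: "continuous_on {0..1} (gI n)"
  unfolding gI_def by (intro continuous_intros) (auto simp: onept)

lemma gI_int: "(gI n has_integral integral {0..1} (gI n)) {0..1}"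
  using gI_cont integrable_continuous_real by blast

lemma I0: "integral {0..1} (gI 0) = pi/4"
proof -
  have "(gI 0 has_integral (arctan 1 - arctan 0)) {0..1}"
  proof (rule fundamental_theorem_of_calculus)
    fix x :: real assume "x \<in> {0..1}"
    have "(arctan has_real_derivative inverse (1 + x^2)) (at x)" by (rule DERIV_arctan)
    hence "(arctan has_real_derivative gI 0 x) (at x)" by (simp add: gI_def divide_inverse)
    thus "(arctan has_vector_derivative gI 0 x) (at x within {0..1})"
      by (simp add: has_real_derivative_iff_has_vector_derivative[symmetric] has_field_derivative_at_within)
  qed simp
  thus ?thesis by (simp add: integral_unique)
qed

lemma I_rec: "(2*real n+1) * integral {0..1} (gI n) - 2*(real n+1) * integral {0..1} (gI (n+1)) = 1/2^(n+1)"
proof -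
  define f where "f t = t^(2*n+1) / (1+t^2)^(n+1)" for t :: real
  have "((\<lambda>t. (2*real n+1) * gI n t - 2*(real n+1) * gI (n+1) t) has_integral (f 1 - f 0)) {0..1}"
  proof (rule fundamental_theorem_of_calculus)
    fix x :: real assume x: "x \<in> {0..1}"
    have pos: "1 + x^2 > 0" by (simp add: add_pos_nonneg)
    have "(f has_real_derivative
        (real (2*n+1) * x^(2*n) * (1+x^2)^(n+1) - x^(2*n+1) * (real (n+1) * (2*x*(1+x^2)^n))) / ((1+x^2)^(n+1) * (1+x^2)^(n+1))) (at x)"
      unfolding f_def using pos
      by (auto intro!: derivative_eq_intros simp del: power_Suc)
    also have "(real (2*n+1) * x^(2*n) * (1+x^2)^(n+1) - x^(2*n+1) * (real (n+1) * (2*x*(1+x^2)^n))) / ((1+x^2)^(n+1) * (1+x^2)^(n+1))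
        = (2*real n+1) * gI n x - 2*(real n+1) * gI (n+1) x"
    proof -
      define P where "P = (1+x^2)^n"
      define X where "X = x^(2*n)"
      define a where "a = 1+x^2"
      have Ppos: "P > 0" unfolding P_def using pos by simp
      have apos: "a > 0" unfolding a_def using pos by simp
      have e1: "(1+x^2)^(n+1) = P*a" unfolding P_def a_def by simp
      have e2: "(1+x^2)^(n+1+1) = P*a*a" unfolding P_def a_def by simp
      have e3: "x^(2*n+1) = X*x" unfolding X_def by simp
      have e4: "x^(2*(n+1)) = X*x*x" unfolding X_def by (simp add: power_add)
      have e5: "(1+x^2)^n = P" unfolding P_def ..
      have "(real (2*n+1) * X * (P*a) - (X*x) * (real (n+1) * (2*x*P))) / ((P*a) * (P*a))
          = (2*real n+1) * (X/(P*a)) - 2*(real n+1) * (X*x*x / (P*a*a))"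
        using Ppos apos by (simp add: field_simps)
      thus ?thesis unfolding gI_def e1 e2 e3 e4 e5 X_def[symmetric] by simp
    qed
    finally show "(f has_vector_derivative (2*real n+1) * gI n x - 2*(real n+1) * gI (n+1) x) (at x within {0..1})"
      by (simp add: has_real_derivative_iff_has_vector_derivative[symmetric] has_field_derivative_at_within)
  qed simp
  moreover have "((\<lambda>t. (2*real n+1) * gI n t - 2*(real n+1) * gI (n+1) t) has_integral
      ((2*real n+1) * integral {0..1} (gI n) - 2*(real n+1) * integral {0..1} (gI (n+1)))) {0..1}"
    by (intro has_integral_diff has_integral_mult_right gI_int)
  ultimately have "(2*real n+1) * integral {0..1} (gI n) - 2*(real n+1) * integral {0..1} (gI (n+1)) = f 1 - f 0"
    using has_integral_unique by blast
  also have "f 1 - f 0 = 1/2^(n+1)" by (simp add: f_def)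
  finally show ?thesis .
qed


lemma im_pow: "Im ((1-\<i>)^k) = (-1)^k * 2 powr (real k/2) * sin (3*real k*pi/4)"
proof -
  have a: "3*pi/4 = pi - pi/4" by simp
  have c3: "cos (3*pi/4) = - (sqrt 2/2)"
  proof -
    have "cos (3*pi/4) = cos (pi - pi/4)" using a by (rule arg_cong)
    also have "\<dots> = - cos (pi/4)" by (rule cos_pi_minus)
    finally show ?thesis by (simp add: cos_45)
  qed
  have s3: "sin (3*pi/4) = sqrt 2/2"
  proof -
    have "sin (3*pi/4) = sin (pi - pi/4)" using a by (rule arg_cong)
    also have "\<dots> = sin (pi/4)" by (rule sin_pi_minus)
    finally show ?thesis by (simp add: sin_45)
  qed
  have c: "1 - \<i> = - (complex_of_real (sqrt 2) * cis (3*pi/4))"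
    by (simp add: complex_eq_iff c3 s3 cis.sel)
  have "(1-\<i>)^k = (-1)^k * (complex_of_real (sqrt 2) * cis (3*pi/4))^k"
    unfolding c by (rule power_minus)
  also have "\<dots> = complex_of_real ((-1)^k * sqrt 2^k) * cis (real k * (3*pi/4))"
    using Complex.DeMoivre[of "3*pi/4" k] by (simp add: power_mult_distrib)
  finally have "Im ((1-\<i>)^k) = (-1)^k * sqrt 2^k * sin (real k * (3*pi/4))"
    by simp
  moreover have "sqrt 2^k = 2 powr (real k/2)"
    by (simp add: powr_half_sqrt_powr real_sqrt_power powr_realpow)
  ultimately show ?thesis by (simp add: mult_ac)
qed

lemma sum_Im: "(\<Sum>k=1..n. (-1)^k * real ((2*n-k) choose n) * (2 powr (real k/2) / real k) * sin (3*real k*pi/4)) = Im (Wc n)"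
  unfolding Wc_def Im_sum
  by (intro sum.cong refl) (simp add: im_pow Im_divide_of_nat)

lemma gen_id: "(a/b*D)*p + a/c*(e/b) = a/b*(D*p + e/(c::real))"
  by (cases "b = 0"; cases "c = 0") (simp_all add: field_simps)

lemma dfact_pos: "dfact m > 0"
  by (induction m rule: dfact.induct) auto

lemma rhs_eq:
  "real (dfact (2*n+1)) / real (dfact (2*n)) * (pi / 4) + real (2*n+1) / 2 ^ (2*n) * Im (Wc n)
   = real (2*n+1) * integral {0..1} (gI n)"
proof (induction n)
  case 0
  thus ?case by (simp add: I0 Wc_def)
next
  case (Suc n)
  define D where "D = real (dfact (2*n+1)) / real (dfact (2*n))"
  define D' where "D' = real (dfact (2*(n+1)+1)) / real (dfact (2*(n+1)))"
  define U where "U = Im (Wc n)"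
  define U' where "U' = Im (Wc (n+1))"
  define I where "I = integral {0..1} (gI n)"
  define I' where "I' = integral {0..1} (gI (n+1))"
  define F :: real where "F = 2^n"
  have Fpos: "F > 0" unfolding F_def by simp
  have F3: "(2::real)^(2*n) = 4^n" by (simp add: power_mult)
  have F2: "F^2 = 4^n" unfolding F_def
    by (induction n) (simp_all add: power2_eq_square algebra_simps)
  have hD: "D' = (2*real n+3)/(2*real n+2) * D"
  proof -
    have a: "dfact (2*(n+1)+1) = (2*n+3) * dfact (2*n+1)"
      using dfact.simps(3)[of "2*n+1"] by (simp add: algebra_simps)
    have b: "dfact (2*(n+1)) = (2*n+2) * dfact (2*n)"
      using dfact.simps(3)[of "2*n"] by (simp add: algebra_simps)
    show ?thesis unfolding D'_def D_def a b using dfact_pos[of "2*n"]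
      by (simp add: field_simps)
  qed
  have IH: "D * (pi/4) + (2*real n+1) / F^2 * U = (2*real n+1) * I"
    using Suc.IH[unfolded F3] unfolding D_def U_def I_def F2 by (simp add: ac_simps)
  have R1: "(2*real n+2) * U' = 4*(2*real n+1) * U - 2*F"
    using Wc_im_rec[of n] unfolding U_def U'_def F_def by (simp add: algebra_simps)
  have R2: "(2*real n+1) * I - 2*(real n+1) * I' = 1/(2*F)"
    using I_rec[of n] unfolding I_def I'_def F_def by simp
  have U'e: "U' = (4*(2*real n+1) * U - 2*F) / (2*real n+2)"
    using R1 by (simp add: field_simps)
  have I'e: "I' = ((2*real n+1) * I - 1/(2*F)) / (2*real n+2)"
    using R2 by (simp add: field_simps)
  have Fnz: "F \<noteq> 0" using Fpos by simp
  have n2: "2*real n+2 \<noteq> 0" by (simp add: add_nonneg_pos)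
  have br: "D*(pi/4) + (4*(2*real n+1)*U - 2*F)/(4*F^2) = (2*real n+1)*I - 1/(2*F)"
    unfolding IH[symmetric] using Fnz by (simp add: field_simps power2_eq_square)
  have "D' * (pi/4) + (2*real n+3) / (4*F^2) * U' =
      (2*real n+3)/(2*real n+2) * (D*(pi/4) + (4*(2*real n+1)*U - 2*F)/(4*F^2))"
    unfolding hD U'e by (rule gen_id)
  also have "\<dots> = (2*real n+3)/(2*real n+2) * ((2*real n+1)*I - 1/(2*F))" by (simp only: br)
  also have "\<dots> = (2*real n+3) * I'" unfolding I'e by simp
  finally have "D' * (pi/4) + (2*real n+3) / (4*F^2) * U' = (2*real n+3) * I'" .
  moreover have "(2::real)^(2*Suc n) = 4*F^2" unfolding F2 by (simp add: power_mult)
  ultimately show ?case unfolding D'_def U'_def I'_def by (simp add: algebra_simps)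
qed


lemma cut_plane_alt: "cut_plane = - {z. Im z = 0 \<and> Re z \<ge> 1}"
  unfolding cut_plane_def
  by (auto simp: complex_eq_iff)

lemma open_cut_plane: "open cut_plane"
  unfolding cut_plane_alt
  by (intro open_Compl closed_Collect_conj closed_Collect_eq closed_Collect_le continuous_intros)

lemma cut_plane_iff: "z \<in> cut_plane \<longleftrightarrow> Im z \<noteq> 0 \<or> Re z < 1"
  unfolding cut_plane_alt by auto

lemma ball_sub_cut_plane: "ball 0 1 \<subseteq> cut_plane"
proof
  fix z :: complex assume "z \<in> ball 0 1"
  hence "norm z < 1" by simp
  hence "Re z < 1" using complex_Re_le_cmod[of z] by linarith
  thus "z \<in> cut_plane" unfolding cut_plane_iff by simp
qed

lemma connected_cut_plane: "connected cut_plane"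
proof (rule starlike_imp_connected)
  show "starlike cut_plane"
    unfolding starlike_def
  proof (intro bexI ballI subsetI)
    show "0 \<in> cut_plane" unfolding cut_plane_iff by simp
    fix x y assume x: "x \<in> cut_plane" and y: "y \<in> closed_segment 0 x"
    then obtain u :: real where u: "0 \<le> u" "u \<le> 1" "y = u *\<^sub>R x"
      by (auto simp: in_segment)
    show "y \<in> cut_plane"
    proof (cases "Im x = 0")
      case True
      hence "Re x < 1" using x unfolding cut_plane_iff by simp
      have "u * Re x < 1"
      proof (cases "Re x \<ge> 0")
        case True
        have "u * Re x \<le> Re x" using mult_left_le_one_le[OF True u(1) u(2)] .
        thus ?thesis using \<open>Re x < 1\<close> by linarith
      next
        case False
        have "u * Re x \<le> 0" using u False by (simp add: mult_nonneg_nonpos)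
        thus ?thesis by linarith
      qed
      thus ?thesis using u unfolding cut_plane_iff by simp
    next
      case False
      show ?thesis
      proof (cases "u = 0")
        case True thus ?thesis using u unfolding cut_plane_iff by simp
      next
        case False
        thus ?thesis using u \<open>Im x \<noteq> 0\<close> unfolding cut_plane_iff by simp
      qed
    qed
  qed
qed

lemma denom_nz:
  assumes "z \<in> cut_plane" "0 \<le> t" "t \<le> 1"
  shows "1 - z * complex_of_real (t^2) \<noteq> 0"
proof
  assume h: "1 - z * complex_of_real (t^2) = 0"
  hence t0: "t \<noteq> 0" by auto
  have "z = complex_of_real (1 / t^2)" using h t0
    by (simp add: field_simps)
  moreover have "1 / t^2 \<ge> 1"
  proof -
    have "t^2 \<le> 1" using assms by (simp add: power_le_one)
    moreover have "t^2 > 0" using t0 by simp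
    ultimately show ?thesis by simp
  qed
  ultimately show False using assms(1) unfolding cut_plane_iff by simp
qed


definition gC :: "nat \<Rightarrow> complex \<Rightarrow> real \<Rightarrow> complex" where
  "gC n z t = (complex_of_real t)^(2*n) / (1 - z * complex_of_real (t^2))^(n+1)"

definition dC :: "nat \<Rightarrow> complex \<Rightarrow> real \<Rightarrow> complex" where
  "dC n z t = of_nat (n+1) * complex_of_real (t^2) * (complex_of_real t)^(2*n) / (1 - z * complex_of_real (t^2))^(n+2)"

definition FF :: "nat \<Rightarrow> complex \<Rightarrow> complex" where
  "FF n z = integral {0..1} (gC n z)"

lemma denom_nz':
  assumes "z \<in> cut_plane" "0 \<le> t" "t \<le> 1"
  shows "z * (complex_of_real t)^2 \<noteq> 1"
  using denom_nz[OF assms] by (simp add: of_real_power)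

lemma pow_sq_aux: "((w::complex)^(n+1))^2 = w^n * w^(n+2)"
  by (simp add: power2_eq_square flip: power_add)

lemma alg2:
  assumes "(w::complex) \<noteq> 0"
  shows "c * - ((of_nat (n+1) * w^n * (- sv)) * inverse ((w^(n+1))^Suc (Suc 0))) = of_nat (n+1) * sv * c / w^(n+2)"
  unfolding pow_sq_aux[unfolded numeral_2_eq_2] using assms by (simp add: field_simps)

lemma deriv_aux:
  assumes nz: "1 - z * sv \<noteq> (0::complex)"
  shows "((\<lambda>z. c / (1 - z * sv)^(n+1)) has_field_derivative (of_nat (n+1) * sv * c / (1 - z * sv)^(n+2))) (at z)"
proof -
  have d1: "((\<lambda>z. (1 - z * sv)^(n+1)) has_field_derivative (of_nat (n+1) * (1 - z * sv)^n * (- sv))) (at z)"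
  proof -
    have d0: "((\<lambda>z. 1 - z * sv) has_field_derivative (- sv)) (at z)"
      by (auto intro!: derivative_eq_intros)
    show ?thesis using DERIV_power[OF d0, of "n+1"] by (simp add: mult_ac)
  qed
  have d2: "((\<lambda>z. inverse ((1 - z * sv)^(n+1))) has_field_derivative
      - ((of_nat (n+1) * (1 - z * sv)^n * (- sv)) * inverse (((1 - z * sv)^(n+1))^Suc (Suc 0)))) (at z)"
    by (rule DERIV_inverse_fun[OF d1]) (use nz in simp)
  have d3: "((\<lambda>z. c * inverse ((1 - z * sv)^(n+1))) has_field_derivative
      c * - ((of_nat (n+1) * (1 - z * sv)^n * (- sv)) * inverse (((1 - z * sv)^(n+1))^Suc (Suc 0)))) (at z)"
    by (rule DERIV_cmult[OF d2])
  have e: "c * - ((of_nat (n+1) * (1 - z * sv)^n * (- sv)) * inverse (((1 - z * sv)^(n+1))^Suc (Suc 0)))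
      = of_nat (n+1) * sv * c / (1 - z * sv)^(n+2)"
    by (rule alg2[OF nz])
  show ?thesis using d3 unfolding e by (simp add: divide_inverse)
qed

lemma gC_deriv:
  assumes "z \<in> cut_plane" "0 \<le> t" "t \<le> 1"
  shows "((\<lambda>z. gC n z t) has_field_derivative dC n z t) (at z)"
proof -
  have nz: "1 - z * complex_of_real (t^2) \<noteq> 0" by (rule denom_nz[OF assms])
  show ?thesis
    unfolding gC_def dC_def using deriv_aux[OF nz, of "(complex_of_real t)^(2*n)" n]
    by (simp add: mult_ac)
qed

lemma gC_cont: "z \<in> cut_plane \<Longrightarrow> continuous_on {0..1} (gC n z)"
  unfolding gC_def by (intro continuous_intros) (auto simp: denom_nz denom_nz')

lemma dC_cont: "U \<subseteq> cut_plane \<Longrightarrow> continuous_on (U \<times> {0..1}) (\<lambda>(z,t). dC n z t)"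
  unfolding dC_def case_prod_beta
  by (intro continuous_intros) (auto simp: denom_nz denom_nz')

lemma FF_holo: "FF n holomorphic_on cut_plane"
proof -
  have "FF n field_differentiable (at z0)" if z0: "z0 \<in> cut_plane" for z0
  proof -
    obtain e where e: "e > 0" "ball z0 e \<subseteq> cut_plane"
      using open_cut_plane z0 open_contains_ball by blast
    have "(\<lambda>z. integral (cbox 0 1) (gC n z)) field_differentiable at z0 within ball z0 e"
    proof (rule leibniz_rule_field_differentiable[where fx = "dC n"])
      fix z t assume "z \<in> ball z0 e" "t \<in> cbox (0::real) 1"
      thus "((\<lambda>z. gC n z t) has_field_derivative dC n z t) (at z within ball z0 e)"
      proof -
        have "z \<in> cut_plane" using e \<open>z \<in> ball z0 e\<close> by auto
        thus ?thesis using gC_deriv[of z t n] \<open>t \<in> cbox 0 1\<close>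
          by (auto intro: has_field_derivative_at_within)
      qed
    next
      fix z assume "z \<in> ball z0 e"
      hence "z \<in> cut_plane" using e by auto
      thus "gC n z integrable_on cbox 0 1"
        using gC_cont[of z n] integrable_continuous_real by auto
    next
      show "continuous_on (ball z0 e \<times> cbox 0 1) (\<lambda>(x, t). dC n x t)"
        using dC_cont[OF e(2)] by simp
    qed (use e in auto)
    hence "(\<lambda>z. integral (cbox 0 1) (gC n z)) field_differentiable at z0"
      using e at_within_open[of z0 "ball z0 e"] by simp
    thus ?thesis unfolding FF_def by simp
  qed
  thus ?thesis using open_cut_plane
    by (simp add: holomorphic_on_def field_differentiable_at_within)
qed


lemma binom_series:
  fixes w :: complex
  assumes "norm w < 1"
  shows "(\<lambda>k. of_nat ((n+k) choose k) * w^k) sums inverse ((1-w)^(n+1))"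
proof -
  define a :: complex where "a = - of_nat (n+1)"
  have "norm (-w) < 1" using assms by simp
  from gen_binomial_complex[OF this, of a]
  have s: "(\<lambda>k. (a gchoose k) * (-w)^k) sums (1 + -w) powr a" .
  have t: "(a gchoose k) * (-w)^k = of_nat ((n+k) choose k) * w^k" for k
  proof -
    have "(a gchoose k) = (-1)^k * ((of_nat k - a - 1) gchoose k)" by (rule gbinomial_negated_upper)
    also have "of_nat k - a - 1 = of_nat (n+k)" by (simp add: a_def)
    also have "(of_nat (n+k) gchoose k) = (of_nat ((n+k) choose k) :: complex)"
      by (simp add: binomial_gbinomial)
    finally have "(a gchoose k) * (-w)^k = of_nat ((n+k) choose k) * ((-1)^k * (-w)^k)"
      by (simp add: mult_ac)
    also have "(-1)^k * (-w)^k = w^k"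
      by (simp add: power_mult_distrib[symmetric])
    finally show ?thesis .
  qed
  have nz: "1 - w \<noteq> 0" using assms by auto
  have "(1 + -w) powr a = inverse ((1-w)^(n+1))"
  proof -
    have "(1 + -w) powr a = inverse ((1-w) powr of_nat (n+1))"
      unfolding a_def using powr_minus[of "1-w" "of_nat (n+1)"] by simp
    also have "(1-w) powr of_nat (n+1) = (1-w)^(n+1)" by (rule powr_nat') (use nz in blast)
    finally show ?thesis .
  qed
  thus ?thesis using s t by simp
qed

lemma poch_ratio:
  fixes n k :: nat
  shows "pochhammer (of_nat n + 1/2 :: complex) k / pochhammer (of_nat n + 3/2) k
       = of_nat (2*n+1) / of_nat (2*n+2*k+1)"
proof -
  define a :: complex where "a = of_nat n + 1/2"
  have a1: "of_nat n + 3/2 = a + 1" by (simp add: a_def)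
  have "pochhammer a (Suc k) = a * pochhammer (a+1) k" by (rule pochhammer_rec)
  moreover have "pochhammer a (Suc k) = (a + of_nat k) * pochhammer a k" by (rule pochhammer_rec')
  ultimately have eq: "(a + of_nat k) * pochhammer a k = a * pochhammer (a+1) k" by simp
  have e: "a + 1 = of_real (real n + 3/2)" by (simp add: a_def)
  have "pochhammer (a+1) k = of_real (pochhammer (real n + 3/2) k)"
    unfolding e by (rule pochhammer_of_real)
  moreover have "pochhammer (real n + 3/2) k > 0" by (rule pochhammer_pos) simp
  ultimately have nz1: "pochhammer (a+1) k \<noteq> 0" by simp
  have nz2: "a + of_nat k \<noteq> 0"
  proof -
    have "a + of_nat k = of_real (real n + real k + 1/2)" by (simp add: a_def)
    thus ?thesis by (metis add_nonneg_pos of_nat_0_le_iff of_real_eq_0_iff order_less_irrefl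
        add_nonneg_nonneg half_gt_zero zero_less_one)
  qed
  have "pochhammer a k / pochhammer (a+1) k = a / (a + of_nat k)"
    using eq nz1 nz2 by (simp add: field_simps)
  also have "a / (a + of_nat k) = of_nat (2*n+1) / of_nat (2*n+2*k+1)"
  proof -
    have x: "a = of_nat (2*n+1) / 2" "a + of_nat k = of_nat (2*n+2*k+1) / 2"
      unfolding a_def by (simp_all add: field_simps)
    have g: "(X/2) / (Y/2) = X / (Y::complex)" for X Y
      by (cases "Y = 0") (simp_all add: field_simps)
    show ?thesis unfolding x(2) unfolding x(1) by (rule g)
  qed
  finally show ?thesis unfolding a1 a_def .
qed

lemma poch_binom: "pochhammer (of_nat n + 1 :: complex) k / fact k = of_nat ((n+k) choose k)"
proof -
  have "(of_nat (n+k) gchoose k) = pochhammer (of_nat (n+k) - of_nat k + 1) k / (fact k :: complex)"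
    by (rule gbinomial_pochhammer')
  moreover have "(of_nat (n+k) - of_nat k + 1 :: complex) = of_nat n + 1" by simp
  ultimately show ?thesis by (simp add: binomial_gbinomial)
qed

lemma hyp_term:
  "pochhammer (of_nat n + 1/2 :: complex) k * pochhammer (of_nat n + 1) k / pochhammer (of_nat n + 3/2) k * z^k / fact k
   = of_nat (2*n+1) * (of_nat ((n+k) choose k) * z^k / of_nat (2*n+2*k+1))"
proof -
  have "pochhammer (of_nat n + 1/2 :: complex) k * pochhammer (of_nat n + 1) k / pochhammer (of_nat n + 3/2) k * z^k / fact k
     = (pochhammer (of_nat n + 1/2 :: complex) k / pochhammer (of_nat n + 3/2) k) * (pochhammer (of_nat n + 1) k / fact k) * z^k"
    by (simp add: field_simps)
  also have "\<dots> = of_nat (2*n+1) / of_nat (2*n+2*k+1) * of_nat ((n+k) choose k) * z^k"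
    unfolding poch_ratio poch_binom ..
  finally show ?thesis by (simp add: field_simps)
qed


lemma pow_int: "((\<lambda>t. (complex_of_real t)^p) has_integral (1 / of_nat (p+1))) {0..1}"
proof -
  have "((\<lambda>t. t^p) has_integral ((1::real)^(p+1)/real (p+1) - 0^(p+1)/real (p+1))) {0..1}"
  proof (rule fundamental_theorem_of_calculus)
    fix x :: real assume "x \<in> {0..1}"
    have d: "((\<lambda>t. t^(p+1)) has_real_derivative real (p+1) * x^p) (at x)"
      using DERIV_pow[of "p+1" x] by simp
    have "((\<lambda>t. t^(p+1)/real (p+1)) has_real_derivative real (p+1) * x^p / real (p+1)) (at x)"
      by (rule DERIV_cdivide[OF d])
    hence "((\<lambda>t. t^(p+1)/real (p+1)) has_real_derivative x^p) (at x)"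
      by (simp del: of_nat_add)
    thus "((\<lambda>t. t^(p+1)/real (p+1)) has_vector_derivative x^p) (at x within {0..1})"
      by (simp add: has_real_derivative_iff_has_vector_derivative[symmetric] has_field_derivative_at_within)
  qed simp
  hence "((\<lambda>t. t^p) has_integral (1/real (p+1))) {0..1}" by simp
  hence h: "((\<lambda>t. complex_of_real (t^p)) has_integral complex_of_real (1/real (p+1))) {0..1}"
    by (rule has_integral_of_real)
  have e: "complex_of_real (1/real (p+1)) = 1 / of_nat (p+1)"
    by (simp only: of_real_divide of_real_1 of_real_of_nat_eq)
  show ?thesis using h unfolding e of_real_power .
qed

lemma series_int:
  assumes z: "norm z < 1"
  shows "(\<lambda>k. of_nat ((n+k) choose k) * z^k / of_nat (2*n+2*k+1)) sums FF n z"
proof -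
  define u where "u k t = of_nat ((n+k) choose k) * z^k * (complex_of_real t)^(2*n+2*k)" for k t
  define M where "M k = real ((n+k) choose k) * norm z ^ k" for k
  have "(\<lambda>k. of_nat ((n+k) choose k) * (complex_of_real (norm z))^k) sums inverse ((1 - complex_of_real (norm z))^(n+1))"
    by (rule binom_series) (use z in simp)
  hence "summable (\<lambda>k. complex_of_real (M k))"
    unfolding M_def by (simp add: sums_iff of_real_power)
  hence sM: "summable M" by simp
  have bound: "norm (u k t) \<le> M k" if "t \<in> {0..1}" for k t
  proof -
    have "norm (u k t) = real ((n+k) choose k) * norm z ^ k * \<bar>t\<bar>^(2*n+2*k)"
      unfolding u_def by (simp add: norm_mult norm_power)
    also have "\<dots> \<le> real ((n+k) choose k) * norm z ^ k * 1"
      using that by (intro mult_left_mono) (auto simp: power_le_one)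
    finally show ?thesis unfolding M_def by simp
  qed
  have ul: "uniform_limit {0..1} (\<lambda>N t. \<Sum>k<N. u k t) (\<lambda>t. suminf (\<lambda>k. u k t)) sequentially"
    by (rule Weierstrass_m_test[OF bound sM])
  have pw: "suminf (\<lambda>k. u k t) = gC n z t" if t: "t \<in> {0..1}" for t
  proof -
    define w where "w = z * complex_of_real (t^2)"
    have n1: "norm (complex_of_real (t^2)) = t^2" by (simp only: norm_of_real abs_power2)
    have n2: "t^2 \<le> 1" using t by (auto intro: power_le_one)
    have "norm (complex_of_real (t^2)) \<le> 1" using n1 n2 by simp
    hence "norm z * norm (complex_of_real (t^2)) \<le> norm z * 1"
      by (intro mult_left_mono) auto
    hence "norm w \<le> norm z" unfolding w_def by (simp add: norm_mult)
    hence "norm w < 1" using z by linarith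
    from binom_series[OF this, of n]
    have "(\<lambda>k. (complex_of_real t)^(2*n) * (of_nat ((n+k) choose k) * w^k)) sums
          ((complex_of_real t)^(2*n) * inverse ((1-w)^(n+1)))"
      by (rule sums_mult)
    moreover have "(complex_of_real t)^(2*n) * (of_nat ((n+k) choose k) * w^k) = u k t" for k
    proof -
      have p: "(complex_of_real t)^(2*n+2*k) = (complex_of_real t)^(2*n) * ((complex_of_real t)^2)^k"
        by (simp add: power_add power_mult)
      have q: "w^k = z^k * ((complex_of_real t)^2)^k" by (simp add: w_def power_mult_distrib of_real_power)
      show ?thesis unfolding u_def p q by (simp only: mult_ac)
    qed
    ultimately have "(\<lambda>k. u k t) sums ((complex_of_real t)^(2*n) * inverse ((1-w)^(n+1)))" by simp
    thus ?thesis unfolding gC_def w_def by (simp add: sums_iff divide_inverse)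
  qed
  have ul2: "uniform_limit {0..1} (\<lambda>N t. \<Sum>k<N. u k t) (gC n z) sequentially"
    using ul by (subst (asm) uniform_limit_cong'[where g = "\<lambda>N t. \<Sum>k<N. u k t" and i = "gC n z"]) (auto simp: pw)
  have cont: "continuous_on {0..1} (\<lambda>t. \<Sum>k<N. u k t)" for N
    unfolding u_def by (intro continuous_intros)
  obtain I J where I: "\<And>N. ((\<lambda>t. \<Sum>k<N. u k t) has_integral I N) {0..1}"
    and J: "(gC n z has_integral J) {0..1}" and IJ: "I \<longlonglongrightarrow> J"
    using uniform_limit_integral[OF ul2 cont] trivial_limit_sequentially by blast
  have J': "J = FF n z" unfolding FF_def using J by (simp add: integral_unique)
  have uk: "(u k has_integral (of_nat ((n+k) choose k) * z^k / of_nat (2*n+2*k+1))) {0..1}" for k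
  proof -
    have "((\<lambda>t. of_nat ((n+k) choose k) * z^k * (complex_of_real t)^(2*n+2*k)) has_integral
        (of_nat ((n+k) choose k) * z^k * (1 / of_nat (2*n+2*k+1)))) {0..1}"
      by (rule has_integral_mult_right[OF pow_int])
    thus ?thesis unfolding u_def by simp
  qed
  have Ieq: "I N = (\<Sum>k<N. of_nat ((n+k) choose k) * z^k / of_nat (2*n+2*k+1))" for N
    using has_integral_sum[of "{..<N}" u "\<lambda>k. of_nat ((n+k) choose k) * z^k / of_nat (2*n+2*k+1)" "{0..1}"] uk I[of N]
    by (auto intro: has_integral_unique)
  have "I = (\<lambda>N. \<Sum>k<N. of_nat ((n+k) choose k) * z^k / of_nat (2*n+2*k+1))"
    using Ieq by (intro ext) 
  thus ?thesis using IJ J' unfolding sums_def by simp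
qed


theorem corollary4p1:
  fixes n :: nat
  shows "hyp2F1 (of_nat n + 1/2) (of_nat n + 1) (of_nat n + 3/2) (-1) =
    complex_of_real
      (real (dfact (2*n+1)) / real (dfact (2*n)) * (pi / 4)
       + real (2*n+1) / 2 ^ (2*n) *
         (\<Sum>k=1..n. (-1) ^ k * real ((2*n - k) choose n) * (2 powr (real k / 2) / real k)
                     * sin (3 * real k * pi / 4)))"
proof -
  define f where "f z = of_nat (2*n+1) * FF n z" for z
  have holf: "f holomorphic_on cut_plane"
    unfolding f_def using FF_holo[of n] by (intro holomorphic_intros)
  have agree: "f w = hyp2F1_series (of_nat n + 1/2) (of_nat n + 1) (of_nat n + 3/2) w" if w: "w \<in> ball 0 1" for w
  proof -
    have "norm w < 1" using w by simp
    from sums_mult[OF series_int[OF this, of n], of "of_nat (2*n+1)"]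
    have "(\<lambda>k. pochhammer (of_nat n + 1/2 :: complex) k * pochhammer (of_nat n + 1) k / pochhammer (of_nat n + 3/2) k * w^k / fact k)
        sums f w"
      unfolding hyp_term f_def .
    thus ?thesis unfolding hyp2F1_series_def by (simp add: sums_iff)
  qed
  have m1: "(-1::complex) \<in> cut_plane" unfolding cut_plane_iff by simp
  have hyp: "hyp2F1 (of_nat n + 1/2) (of_nat n + 1) (of_nat n + 3/2) (-1) = f (-1)"
    unfolding hyp2F1_def
  proof (rule the_equality)
    show "\<exists>g. g holomorphic_on cut_plane \<and>
        (\<forall>w\<in>ball 0 1. g w = hyp2F1_series (of_nat n + 1/2) (of_nat n + 1) (of_nat n + 3/2) w) \<and> g (-1) = f (-1)"
      using holf agree by blast
  next
    fix v assume "\<exists>g. g holomorphic_on cut_plane \<and>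
        (\<forall>w\<in>ball 0 1. g w = hyp2F1_series (of_nat n + 1/2) (of_nat n + 1) (of_nat n + 3/2) w) \<and> g (-1) = v"
    then obtain g where g: "g holomorphic_on cut_plane"
        "\<And>w. w \<in> ball 0 1 \<Longrightarrow> g w = hyp2F1_series (of_nat n + 1/2) (of_nat n + 1) (of_nat n + 3/2) w"
        "g (-1) = v" by blast
    have "g (-1) = f (-1)"
      by (rule analytic_continuation_open[OF open_ball open_cut_plane _ connected_cut_plane ball_sub_cut_plane g(1) holf _ m1])
         (auto simp: g(2) agree)
    thus "v = f (-1)" using g(3) by simp
  qed
  have gm1: "gC n (-1) t = complex_of_real (gI n t)" for t
    unfolding gC_def gI_def by (simp add: of_real_power)
  have "FF n (-1) = complex_of_real (integral {0..1} (gI n))"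
  proof -
    have "((\<lambda>t. complex_of_real (gI n t)) has_integral complex_of_real (integral {0..1} (gI n))) {0..1}"
      by (rule has_integral_of_real[OF gI_int])
    thus ?thesis unfolding FF_def gm1 by (simp add: integral_unique)
  qed
  hence "f (-1) = complex_of_real (real (2*n+1) * integral {0..1} (gI n))"
    unfolding f_def by simp
  also have "real (2*n+1) * integral {0..1} (gI n) =
      real (dfact (2*n+1)) / real (dfact (2*n)) * (pi / 4)
       + real (2*n+1) / 2 ^ (2*n) *
         (\<Sum>k=1..n. (-1) ^ k * real ((2*n - k) choose n) * (2 powr (real k / 2) / real k)
                     * sin (3 * real k * pi / 4))"
    unfolding sum_Im rhs_eq ..
  finally show ?thesis using hyp by simp
qed

end
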